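(* In every Choi-defined resource theory, the free operations coincide with the completely resource-non-generating operations: a channel $\mathcal{M}_{A\to B}$ is free if and only if for every system $R$ and every free state $\sigma_{AR}$, the state $(\mathcal{M}_{A\to B}\otimes\mathcal{I}_R)(\sigma_{AR})$ is free.
   Context: A quantum resource theory specifies, for all finite-dimensional systems, a set of free channels containing the identity, swap and discarding (partial trace) channels and closed under sequential and parallel composition; free states are those preparable by free channels (so free channels map free states to free states), and the family of free states is closed under tensor product, partial trace and system swaps. For a channel $\mathcal{M}_{A\to B}$ its renormalized Choi matrix is $\frac{1}{d_A}(\mathcal{M}_{A\to B}\otimes\mathcal{I}_{A'})(\Phi_{AA'})$, where $A'$ is a copy of $A$, $d_A=\dim A$ and $\Phi_{AA'}=\sum_{x,y}|x\rangle\langle y|_A\otimes|x\rangle\langle y|_{A'}$ for a fixed orthonormal basis. A Choi-defined resource theory (CDRT) is a resource theory in which a channel is free if and only if its renormalized Choi matrix is a free state. A channel $\mathcal{M}_{A\to B}$ is completely resource-non-generating (CRNG) if $(\mathcal{M}_{A\to B}\otimes\mathcal{I}_R)(\sigma_{AR})$ is free for every system $R$ and every free state $\sigma_{AR}$. *)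

theory Defs
  imports "Jordan_Normal_Form.Matrix"
begin

definition adj :: "complex mat \<Rightarrow> complex mat" where
  "adj K = mat (dim_col K) (dim_row K) (\<lambda>(i,j). cnj (K $$ (j,i)))"

text \<open>Kronecker product; the index (i,k) of a composite system is encoded as i * dim2 + k.\<close>
definition kron :: "complex mat \<Rightarrow> complex mat \<Rightarrow> complex mat" where
  "kron X Y = mat (dim_row X * dim_row Y) (dim_col X * dim_col Y)
     (\<lambda>(i,j). X $$ (i div dim_row Y, j div dim_col Y) * Y $$ (i mod dim_row Y, j mod dim_col Y))"

definition ket_bra :: "nat \<Rightarrow> nat \<Rightarrow> nat \<Rightarrow> complex mat" where
  "ket_bra d x y = mat d d (\<lambda>(i,j). if i = x \<and> j = y then 1 else 0)"

definition msum :: "nat \<Rightarrow> nat \<Rightarrow> complex mat list \<Rightarrow> complex mat" where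
  "msum r c Xs = mat r c (\<lambda>(i,j). \<Sum>X\<leftarrow>Xs. X $$ (i,j))"

type_synonym chan = "complex mat \<Rightarrow> complex mat"

text \<open>A quantum channel (CPTP map) from a d_A-dimensional to a d_B-dimensional system, given
  in Kraus form. A channel is represented canonically: it maps every matrix that is not
  d_A x d_A to the zero matrix, so that channels are equal iff they act equally on
  operators of the input system.\<close>
definition is_channel :: "nat \<Rightarrow> nat \<Rightarrow> chan \<Rightarrow> bool" where
  "is_channel dA dB M \<longleftrightarrow>
     (\<exists>Ks. (\<forall>K\<in>set Ks. K \<in> carrier_mat dB dA) \<and>
           msum dA dA (map (\<lambda>K. adj K * K) Ks) = 1\<^sub>m dA \<and>
           (\<forall>X\<in>carrier_mat dA dA. M X = msum dB dB (map (\<lambda>K. K * X * adj K) Ks))) \<and>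
     (\<forall>X. X \<notin> carrier_mat dA dA \<longrightarrow> M X = 0\<^sub>m dB dB)"

definition id_chan :: "nat \<Rightarrow> chan" where
  "id_chan d X = (if X \<in> carrier_mat d d then X else 0\<^sub>m d d)"

definition seq_chan :: "chan \<Rightarrow> chan \<Rightarrow> chan" where
  "seq_chan N M = (\<lambda>X. N (M X))"

text \<open>Parallel composition M (x) N of a channel M : dA -> dB and N : dC -> dD, defined by
  linear extension of (M (x) N)(E_ij (x) E_kl) = M(E_ij) (x) N(E_kl).\<close>
definition par_chan :: "nat \<Rightarrow> nat \<Rightarrow> nat \<Rightarrow> nat \<Rightarrow> chan \<Rightarrow> chan \<Rightarrow> chan" where
  "par_chan dA dB dC dD M N X =
     (if X \<in> carrier_mat (dA * dC) (dA * dC) then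
        mat (dB * dD) (dB * dD) (\<lambda>(p,q).
          \<Sum>i<dA. \<Sum>j<dA. \<Sum>k<dC. \<Sum>l<dC.
            X $$ (i * dC + k, j * dC + l) * kron (M (ket_bra dA i j)) (N (ket_bra dC k l)) $$ (p,q))
      else 0\<^sub>m (dB * dD) (dB * dD))"

definition swap_chan :: "nat \<Rightarrow> nat \<Rightarrow> chan" where
  "swap_chan dA dB X =
     (if X \<in> carrier_mat (dA * dB) (dA * dB) then
        mat (dB * dA) (dB * dA) (\<lambda>(p,q).
          X $$ ((p mod dA) * dB + p div dA, (q mod dA) * dB + q div dA))
      else 0\<^sub>m (dB * dA) (dB * dA))"

definition ptrace_chan :: "nat \<Rightarrow> nat \<Rightarrow> chan" where
  "ptrace_chan dA dB X =
     (if X \<in> carrier_mat (dA * dB) (dA * dB) then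
        mat dA dA (\<lambda>(i,j). \<Sum>k<dB. X $$ (i * dB + k, j * dB + k))
      else 0\<^sub>m dA dA)"

definition trace_chan :: "nat \<Rightarrow> chan" where
  "trace_chan dA X = (if X \<in> carrier_mat dA dA then mat 1 1 (\<lambda>_. \<Sum>i<dA. X $$ (i,i)) else 0\<^sub>m 1 1)"

definition prep_chan :: "nat \<Rightarrow> complex mat \<Rightarrow> chan" where
  "prep_chan d \<rho> X = (if X \<in> carrier_mat 1 1 then X $$ (0,0) \<cdot>\<^sub>m \<rho> else 0\<^sub>m d d)"

text \<open>Renormalized Choi matrix (1/d_A) (M (x) I_A')(Phi_AA').\<close>
definition choi :: "nat \<Rightarrow> nat \<Rightarrow> chan \<Rightarrow> complex mat" where
  "choi dA dB M = mat (dB * dA) (dB * dA) (\<lambda>(p,q). (1 / of_nat dA) *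
     (\<Sum>x<dA. \<Sum>y<dA. kron (M (ket_bra dA x y)) (ket_bra dA x y) $$ (p,q)))"

text \<open>Systems form an abstract type 's with a dimension, a tensor product and a trivial
  (one-dimensional) system.\<close>

definition free_states ::
  "('s \<Rightarrow> nat) \<Rightarrow> 's \<Rightarrow> ('s \<Rightarrow> 's \<Rightarrow> chan set) \<Rightarrow> 's \<Rightarrow> complex mat set" where
  "free_states sdim triv Free A = {\<rho>. prep_chan (sdim A) \<rho> \<in> Free triv A}"

definition resource_theory ::
  "('s \<Rightarrow> nat) \<Rightarrow> ('s \<Rightarrow> 's \<Rightarrow> 's) \<Rightarrow> 's \<Rightarrow> ('s \<Rightarrow> 's \<Rightarrow> chan set) \<Rightarrow> bool" where
  "resource_theory sdim tens triv Free \<longleftrightarrow>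
     (\<forall>A. sdim A > 0) \<and> sdim triv = 1 \<and> (\<forall>A B. sdim (tens A B) = sdim A * sdim B) \<and>
     (\<forall>A B M. M \<in> Free A B \<longrightarrow> is_channel (sdim A) (sdim B) M) \<and>
     (\<forall>A. id_chan (sdim A) \<in> Free A A) \<and>
     (\<forall>A B. swap_chan (sdim A) (sdim B) \<in> Free (tens A B) (tens B A)) \<and>
     (\<forall>A B. ptrace_chan (sdim A) (sdim B) \<in> Free (tens A B) A) \<and>
     (\<forall>A. trace_chan (sdim A) \<in> Free A triv) \<and>
     (\<forall>A B C M N. M \<in> Free A B \<longrightarrow> N \<in> Free B C \<longrightarrow> seq_chan N M \<in> Free A C) \<and>
     (\<forall>A B C D M N. M \<in> Free A B \<longrightarrow> N \<in> Free C D \<longrightarrow>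
        par_chan (sdim A) (sdim B) (sdim C) (sdim D) M N \<in> Free (tens A C) (tens B D)) \<and>
     \<comment> \<open>properties of the family of free states stated in the paper\<close>
     (\<forall>A B M \<rho>. M \<in> Free A B \<longrightarrow> \<rho> \<in> free_states sdim triv Free A \<longrightarrow>
        M \<rho> \<in> free_states sdim triv Free B) \<and>
     (\<forall>A B \<rho> \<sigma>. \<rho> \<in> free_states sdim triv Free A \<longrightarrow> \<sigma> \<in> free_states sdim triv Free B \<longrightarrow>
        kron \<rho> \<sigma> \<in> free_states sdim triv Free (tens A B)) \<and>
     (\<forall>A B \<rho>. \<rho> \<in> free_states sdim triv Free (tens A B) \<longrightarrow>
        ptrace_chan (sdim A) (sdim B) \<rho> \<in> free_states sdim triv Free A) \<and>
     (\<forall>A B \<rho>. \<rho> \<in> free_states sdim triv Free (tens A B) \<longrightarrow>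
        swap_chan (sdim A) (sdim B) \<rho> \<in> free_states sdim triv Free (tens B A))"

definition choi_defined ::
  "('s \<Rightarrow> nat) \<Rightarrow> ('s \<Rightarrow> 's \<Rightarrow> 's) \<Rightarrow> 's \<Rightarrow> ('s \<Rightarrow> 's \<Rightarrow> chan set) \<Rightarrow> bool" where
  "choi_defined sdim tens triv Free \<longleftrightarrow>
     resource_theory sdim tens triv Free \<and>
     (\<forall>A B M. is_channel (sdim A) (sdim B) M \<longrightarrow>
        (M \<in> Free A B \<longleftrightarrow> choi (sdim A) (sdim B) M \<in> free_states sdim triv Free (tens B A)))"

definition CRNG ::
  "('s \<Rightarrow> nat) \<Rightarrow> ('s \<Rightarrow> 's \<Rightarrow> 's) \<Rightarrow> 's \<Rightarrow> ('s \<Rightarrow> 's \<Rightarrow> chan set) \<Rightarrow> 's \<Rightarrow> 's \<Rightarrow> chan \<Rightarrow> bool" where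
  "CRNG sdim tens triv Free A B M \<longleftrightarrow>
     (\<forall>R \<sigma>. \<sigma> \<in> free_states sdim triv Free (tens A R) \<longrightarrow>
        par_chan (sdim A) (sdim B) (sdim R) (sdim R) M (id_chan (sdim R)) \<sigma>
          \<in> free_states sdim triv Free (tens B R))"

end

theory Submission
  imports Defs
begin

lemma ket_bra_carrier: "ket_bra d x y \<in> carrier_mat d d"
  by (simp add: ket_bra_def)

lemma delta_sum2:
  fixes f :: "nat \<Rightarrow> nat \<Rightarrow> complex"
  assumes "i < d" "j < d"
  shows "(\<Sum>k<d. \<Sum>l<d. if i = k \<and> j = l then f k l else 0) = f i j"
proof -
  have "(\<Sum>k<d. \<Sum>l<d. if i = k \<and> j = l then f k l else 0)
      = (\<Sum>k<d. if i = k then (\<Sum>l<d. if j = l then f k l else 0) else 0)"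
    by (rule sum.cong) auto
  also have "\<dots> = (\<Sum>l<d. if j = l then f i l else 0)"
    using assms by (simp add: sum.delta)
  also have "\<dots> = f i j" using assms by (simp add: sum.delta)
  finally show ?thesis .
qed

lemma idx_lt:
  fixes i k d :: nat
  assumes "i<d" "k<d" shows "i*d+k < d*d"
proof -
  have "i*d+k < i*d + d" using assms by simp
  also have "\<dots> = (i+1)*d" by simp
  also have "\<dots> \<le> d*d" using assms by (intro mult_right_mono) auto
  finally show ?thesis .
qed

lemma choi_id_entry:
  assumes "i<d" "k<d" "j<d" "l<d"
  shows "choi d d (id_chan d) $$ (i*d+k, j*d+l) = (if i=k \<and> j=l then 1/of_nat d else 0)"
proof -
  have lt1: "i*d+k < d*d" using assms by (simp add: idx_lt)
  have lt2: "j*d+l < d*d" using assms by (simp add: idx_lt)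
  have dpos: "d > 0" using assms by auto
  have e: "kron (id_chan d (ket_bra d x y)) (ket_bra d x y) $$ (i*d+k, j*d+l)
      = (if i = x \<and> j = y \<and> k = x \<and> l = y then 1 else 0)" if "x<d" "y<d" for x y
    using lt1 lt2 assms dpos
    by (simp add: kron_def id_chan_def ket_bra_carrier ket_bra_def)
  have "choi d d (id_chan d) $$ (i*d+k, j*d+l) = (1 / of_nat d) *
     (\<Sum>x<d. \<Sum>y<d. (if i = x \<and> j = y \<and> k = x \<and> l = y then 1 else 0))"
    using lt1 lt2 e by (simp add: choi_def)
  also have "(\<Sum>x<d. \<Sum>y<d. (if i = x \<and> j = y \<and> k = x \<and> l = y then 1 else 0) :: complex)
     = (\<Sum>x<d. \<Sum>y<d. if i = x \<and> j = y then (if k = x \<and> l = y then 1 else 0) else 0)"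
    by (intro sum.cong) auto
  also have "\<dots> = (if k = i \<and> l = j then 1 else 0)"
    using delta_sum2[where f="\<lambda>x y. if k = x \<and> l = y then 1 else 0", OF assms(1) assms(3)] by simp
  finally show ?thesis by auto
qed

lemma par_choi_id:
  assumes "d > 0"
  shows "par_chan d dB d d M (id_chan d) (choi d d (id_chan d)) = choi d dB M"
proof -
  have car: "choi d d (id_chan d) \<in> carrier_mat (d*d) (d*d)" by (simp add: choi_def)
  show ?thesis
  proof (rule eq_matI)
    show "dim_row (par_chan d dB d d M (id_chan d) (choi d d (id_chan d))) = dim_row (choi d dB M)"
      using car by (simp add: par_chan_def choi_def)
    show "dim_col (par_chan d dB d d M (id_chan d) (choi d d (id_chan d))) = dim_col (choi d dB M)"
      using car by (simp add: par_chan_def choi_def)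
    fix p q assume pq: "p < dim_row (choi d dB M)" "q < dim_col (choi d dB M)"
    hence pq': "p < dB*d" "q < dB*d" by (auto simp: choi_def)
    define K where "K i j k l = kron (M (ket_bra d i j)) (id_chan d (ket_bra d k l)) $$ (p,q)" for i j k l
    have "par_chan d dB d d M (id_chan d) (choi d d (id_chan d)) $$ (p,q)
       = (\<Sum>i<d. \<Sum>j<d. \<Sum>k<d. \<Sum>l<d. choi d d (id_chan d) $$ (i * d + k, j * d + l) * K i j k l)"
      using car pq' by (simp add: par_chan_def K_def)
    also have "\<dots> = (\<Sum>i<d. \<Sum>j<d. \<Sum>k<d. \<Sum>l<d. if i = k \<and> j = l then (1/of_nat d) * K k l k l else 0)"
      by (intro sum.cong refl) (auto simp: choi_id_entry)
    also have "\<dots> = (\<Sum>i<d. \<Sum>j<d. (1/of_nat d) * K i j i j)"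
      by (intro sum.cong refl) (rule delta_sum2[where f="\<lambda>k l. (1/of_nat d) * K k l k l"], auto)
    also have "\<dots> = (1/of_nat d) * (\<Sum>i<d. \<Sum>j<d. K i j i j)"
      by (simp add: sum_distrib_left)
    also have "\<dots> = choi d dB M $$ (p,q)"
      using pq' by (simp add: choi_def K_def id_chan_def ket_bra_carrier)
    finally show "par_chan d dB d d M (id_chan d) (choi d d (id_chan d)) $$ (p,q) = choi d dB M $$ (p,q)" .
  qed
qed

theorem theorem2:
  fixes sdim :: "'s \<Rightarrow> nat" and tens :: "'s \<Rightarrow> 's \<Rightarrow> 's" and triv :: 's
    and Free :: "'s \<Rightarrow> 's \<Rightarrow> chan set" and A B :: 's and M :: chan
  assumes "choi_defined sdim tens triv Free"
    and "is_channel (sdim A) (sdim B) M"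
  shows "M \<in> Free A B \<longleftrightarrow> CRNG sdim tens triv Free A B M"
proof
  have rt: "resource_theory sdim tens triv Free" and cd:
    "\<And>A B M. is_channel (sdim A) (sdim B) M \<Longrightarrow>
        (M \<in> Free A B \<longleftrightarrow> choi (sdim A) (sdim B) M \<in> free_states sdim triv Free (tens B A))"
    using assms(1) unfolding choi_defined_def by blast+
  have rtc: "(\<forall>A. sdim A > 0) \<and> sdim triv = 1 \<and> (\<forall>A B. sdim (tens A B) = sdim A * sdim B) \<and>
     (\<forall>A B M. M \<in> Free A B \<longrightarrow> is_channel (sdim A) (sdim B) M) \<and>
     (\<forall>A. id_chan (sdim A) \<in> Free A A) \<and>
     (\<forall>A B. swap_chan (sdim A) (sdim B) \<in> Free (tens A B) (tens B A)) \<and>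
     (\<forall>A B. ptrace_chan (sdim A) (sdim B) \<in> Free (tens A B) A) \<and>
     (\<forall>A. trace_chan (sdim A) \<in> Free A triv) \<and>
     (\<forall>A B C M N. M \<in> Free A B \<longrightarrow> N \<in> Free B C \<longrightarrow> seq_chan N M \<in> Free A C) \<and>
     (\<forall>A B C D M N. M \<in> Free A B \<longrightarrow> N \<in> Free C D \<longrightarrow>
        par_chan (sdim A) (sdim B) (sdim C) (sdim D) M N \<in> Free (tens A C) (tens B D)) \<and>
     (\<forall>A B M \<rho>. M \<in> Free A B \<longrightarrow> \<rho> \<in> free_states sdim triv Free A \<longrightarrow>
        M \<rho> \<in> free_states sdim triv Free B) \<and> True"
    using rt unfolding resource_theory_def by simp
  have posF: "\<And>A. sdim A > 0" using rtc by (simp only:)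
  have chF: "\<And>A B M. M \<in> Free A B \<Longrightarrow> is_channel (sdim A) (sdim B) M" using rtc by (simp only:)
  have idF: "\<And>A. id_chan (sdim A) \<in> Free A A" using rtc by (simp only:)
  have parF: "\<And>A B C D M N. M \<in> Free A B \<Longrightarrow> N \<in> Free C D \<Longrightarrow>
        par_chan (sdim A) (sdim B) (sdim C) (sdim D) M N \<in> Free (tens A C) (tens B D)"
    using rtc by (simp only:)
  have appF: "\<And>A B M \<rho>. M \<in> Free A B \<Longrightarrow> \<rho> \<in> free_states sdim triv Free A \<Longrightarrow>
        M \<rho> \<in> free_states sdim triv Free B"
    using rtc by (simp only:)
  {
    assume "M \<in> Free A B"
    show "CRNG sdim tens triv Free A B M"
      unfolding CRNG_def
    proof (intro allI impI)
      fix R \<sigma> assume s: "\<sigma> \<in> free_states sdim triv Free (tens A R)"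
      have "par_chan (sdim A) (sdim B) (sdim R) (sdim R) M (id_chan (sdim R)) \<in> Free (tens A R) (tens B R)"
        using parF[OF \<open>M \<in> Free A B\<close> idF] .
      then show "par_chan (sdim A) (sdim B) (sdim R) (sdim R) M (id_chan (sdim R)) \<sigma>
          \<in> free_states sdim triv Free (tens B R)"
        using appF s by blast
    qed
  }
  {
    assume c: "CRNG sdim tens triv Free A B M"
    have idf: "id_chan (sdim A) \<in> Free A A" using idF by blast
    have idc: "is_channel (sdim A) (sdim A) (id_chan (sdim A))" using chF idf by blast
    have "choi (sdim A) (sdim A) (id_chan (sdim A)) \<in> free_states sdim triv Free (tens A A)"
      using cd[OF idc] idf by blast
    hence "par_chan (sdim A) (sdim B) (sdim A) (sdim A) M (id_chan (sdim A))
             (choi (sdim A) (sdim A) (id_chan (sdim A))) \<in> free_states sdim triv Free (tens B A)"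
      using c unfolding CRNG_def by blast
    moreover have "sdim A > 0" using posF by blast
    ultimately have "choi (sdim A) (sdim B) M \<in> free_states sdim triv Free (tens B A)"
      by (simp add: par_choi_id)
    thus "M \<in> Free A B" using cd[OF assms(2)] by blast
  }
qed

end
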